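(* Let $f:\mathbb{Z}^n\to\mathbb{R}\cup\{+\infty\}$ be M-convex and $y\in\operatorname{dom} f$ with $\phi(y)<0$. Let $i\in N$ satisfy $f'(y;i,j)>\phi(y)$ for every $j\in N\setminus\{i\}$, and let $h,k\in N$ be distinct with $f'(y;h,k)=\phi(y)$. Then $f'(y+\chi_h-\chi_k;i,j)>\phi(y)$ for every $j\in N\setminus\{i\}$.
   Context: $N=\{1,\dots,n\}$; $\chi_i\in\{0,1\}^n$ is the $i$-th unit vector. For $f:\mathbb{Z}^n\to\mathbb{R}\cup\{+\infty\}$, $\operatorname{dom} f=\{x\in\mathbb{Z}^n: f(x)<+\infty\}$. $f$ is M-convex if $\operatorname{dom} f\neq\emptyset$ and for all $x,y\in\operatorname{dom} f$ and every $i$ with $x(i)>y(i)$ there is $j$ with $x(j)<y(j)$ such that $f(x)+f(y)\ge f(x-\chi_i+\chi_j)+f(y+\chi_i-\chi_j)$. For $x\in\operatorname{dom} f$ and $i,j\in N$, $f'(x;i,j)=f(x+\chi_i-\chi_j)-f(x)$ (possibly $+\infty$; $f'(x;i,i)=0$), and $\phi(x)=\min_{i,j\in N}f'(x;i,j)$. *)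

theory Defs
  imports "HOL-Analysis.Analysis"
begin

text \<open>The ground set N is modelled by a finite type 'a (so n = CARD('a)), points of Z^n are
functions 'a => int, and R \<union> {+\<infinity>} is modelled by ereal together with the explicit
requirement that f never takes the value -\<infinity>.\<close>

definition unitv :: "'a \<Rightarrow> ('a \<Rightarrow> int)" where
  "unitv i = (\<lambda>k. if k = i then 1 else 0)"

definition dom_f :: "(('a \<Rightarrow> int) \<Rightarrow> ereal) \<Rightarrow> ('a \<Rightarrow> int) set" where
  "dom_f f = {x. f x < \<infinity>}"

definition M_convex :: "(('a \<Rightarrow> int) \<Rightarrow> ereal) \<Rightarrow> bool" where
  "M_convex f \<longleftrightarrow> dom_f f \<noteq> {} \<and>
     (\<forall>x\<in>dom_f f. \<forall>y\<in>dom_f f. \<forall>i. x i > y i \<longrightarrow>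
        (\<exists>j. x j < y j \<and>
           f x + f y \<ge> f (\<lambda>l. x l - unitv i l + unitv j l) + f (\<lambda>l. y l + unitv i l - unitv j l)))"

definition fder :: "(('a \<Rightarrow> int) \<Rightarrow> ereal) \<Rightarrow> ('a \<Rightarrow> int) \<Rightarrow> 'a \<Rightarrow> 'a \<Rightarrow> ereal" where
  "fder f x i j = f (\<lambda>l. x l + unitv i l - unitv j l) - f x"

definition phi :: "(('a::finite \<Rightarrow> int) \<Rightarrow> ereal) \<Rightarrow> ('a \<Rightarrow> int) \<Rightarrow> ereal" where
  "phi f x = Min {fder f x i j | i j. True}"

end

theory Submission
  imports Defs
begin

lemma phi_le:
  fixes f :: "('a::finite \<Rightarrow> int) \<Rightarrow> ereal"
  shows "phi f x \<le> fder f x a b"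
proof -
  have "{fder f x i j | i j. True} = (\<lambda>(i,j). fder f x i j) ` UNIV" by auto
  hence fin: "finite {fder f x i j | i j. True}" by simp
  show ?thesis unfolding phi_def by (rule Min_le[OF fin]) auto
qed

theorem mainTheorem3:
  fixes f :: "('a::finite \<Rightarrow> int) \<Rightarrow> ereal" and y :: "'a \<Rightarrow> int" and i h k :: 'a
  assumes range: "\<forall>x. f x \<noteq> -\<infinity>"
    and Mconv: "M_convex f"
    and ydom: "y \<in> dom_f f"
    and neg: "phi f y < 0"
    and hi: "\<forall>j. j \<noteq> i \<longrightarrow> fder f y i j > phi f y"
    and hk: "h \<noteq> k"
    and hkmin: "fder f y h k = phi f y"
  shows "\<forall>j. j \<noteq> i \<longrightarrow> fder f (\<lambda>l. y l + unitv h l - unitv k l) i j > phi f y"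
proof (intro allI impI)
  fix j assume ji: "j \<noteq> i"
  define y' where "y' = (\<lambda>l. y l + unitv h l - unitv k l)"
  define z where "z = (\<lambda>l. y l + unitv h l - unitv k l + unitv i l - unitv j l)"
  have zeq: "(\<lambda>l. y' l + unitv i l - unitv j l) = z" unfolding y'_def z_def by auto
  obtain c where c: "f y = ereal c" using ydom range unfolding dom_f_def
    by (cases "f y") auto
  obtain p where p: "phi f y = ereal p"
  proof -
    have "f y' \<noteq> -\<infinity>" using range by auto
    hence "phi f y \<noteq> -\<infinity>" using hkmin c unfolding fder_def y'_def[symmetric] by (cases "f y'") auto
    moreover have "phi f y \<noteq> \<infinity>" using neg by auto
    ultimately show ?thesis using that by (cases "phi f y") auto
  qed
  have pneg: "p < 0" using neg p by simp
  have gen: "f (\<lambda>l. y l + unitv a l - unitv b l) \<ge> ereal (c + p)" for a b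
  proof -
    have "phi f y \<le> fder f y a b" by (rule phi_le)
    thus ?thesis using c p unfolding fder_def
      by (cases "f (\<lambda>l. y l + unitv a l - unitv b l)") auto
  qed
  have geni: "f (\<lambda>l. y l + unitv i l - unitv b l) > ereal (c + p)" if "b \<noteq> i" for b
  proof -
    have "phi f y < fder f y i b" using hi that by auto
    thus ?thesis using c p unfolding fder_def
      by (cases "f (\<lambda>l. y l + unitv i l - unitv b l)") auto
  qed
  have fy': "f y' = ereal (c + p)"
    using hkmin c p unfolding fder_def y'_def[symmetric] by (cases "f y'") auto
  have key: "f z > ereal (c + p + p)"
  proof (cases "i = k")
    case True
    show ?thesis
    proof (cases "h = j")
      case True
      have "z = y" using \<open>i = k\<close> True unfolding z_def by auto
      thus ?thesis using c pneg by simp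
    next
      case False
      have "z = (\<lambda>l. y l + unitv h l - unitv j l)" using \<open>i = k\<close> unfolding z_def by auto
      hence "f z \<ge> ereal (c + p)" using gen by simp
      moreover have "ereal (c + p) > ereal (c + p + p)" using pneg by simp
      ultimately show ?thesis by order
    qed
  next
    case ik: False
    show ?thesis
    proof (cases "h = j")
      case True
      have "z = (\<lambda>l. y l + unitv i l - unitv k l)" using True unfolding z_def by auto
      hence "f z > ereal (c + p)" using geni ik by auto
      moreover have "ereal (c + p) > ereal (c + p + p)" using pneg by simp
      ultimately show ?thesis by order
    next
      case hj: False
      show ?thesis
      proof (cases "f z = \<infinity>")
        case True thus ?thesis by simp
      next
        case False
        hence zdom: "z \<in> dom_f f" unfolding dom_f_def by (simp add: top.not_eq_extremum)
        have "z i > y i" unfolding z_def unitv_def using ik ji by auto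
        then obtain b where b: "z b < y b"
          and ex: "f z + f y \<ge> f (\<lambda>l. z l - unitv i l + unitv b l) + f (\<lambda>l. y l + unitv i l - unitv b l)"
          using Mconv zdom ydom unfolding M_convex_def by blast
        have bkj: "b = k \<or> b = j" using b unfolding z_def unitv_def by (auto split: if_splits)
        have sum: "f (\<lambda>l. z l - unitv i l + unitv b l) + f (\<lambda>l. y l + unitv i l - unitv b l) > ereal (2*c + 2*p)"
        proof (cases "b = j")
          case True
          have "(\<lambda>l. z l - unitv i l + unitv b l) = y'" unfolding z_def y'_def True by auto
          moreover have "f (\<lambda>l. y l + unitv i l - unitv b l) > ereal (c+p)" using geni ji True by auto
          ultimately show ?thesis using fy'
            by (cases "f (\<lambda>l. y l + unitv i l - unitv b l)") auto
        next
          case False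
          hence bk: "b = k" using bkj by auto
          have "(\<lambda>l. z l - unitv i l + unitv b l) = (\<lambda>l. y l + unitv h l - unitv j l)" unfolding z_def bk by auto
          hence A: "f (\<lambda>l. z l - unitv i l + unitv b l) \<ge> ereal (c+p)" using gen by simp
          have B: "f (\<lambda>l. y l + unitv i l - unitv b l) > ereal (c+p)" using geni ik bk by auto
          show ?thesis using A B
            by (cases "f (\<lambda>l. z l - unitv i l + unitv b l)"; cases "f (\<lambda>l. y l + unitv i l - unitv b l)") auto
        qed
        have "f z + f y > ereal (2*c + 2*p)" using ex sum by order
        thus ?thesis using c by (cases "f z") auto
      qed
    qed
  qed
  show "fder f (\<lambda>l. y l + unitv h l - unitv k l) i j > phi f y"
    unfolding fder_def y'_def[symmetric] zeq using key fy' p by (cases "f z") auto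
qed

end
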